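(* If a Tychonoff space $X$ contains an infinite discrete clopen subset, then $X$ does not have CSHP.
   Context: For a Tychonoff space $Y$, $\operatorname{Homeo}_{cpt}(Y)$ is the group of homeomorphisms of $Y$ with compact support $\operatorname{cl}_Y\{y\mid h(y)\neq y\}$; each extends to a homeomorphism of $\beta Y$ that is the identity on $\beta Y\setminus Y$, and $\operatorname{Homeo}_{cpt}(Y)$ is given the compact-open topology induced from $\beta Y$. For compact $K\subseteq Y$, $\operatorname{Homeo}_K(Y)$ is the subgroup of homeomorphisms fixing every point outside $K$. $Y$ has CSHP if the colimit space topology on $\bigcup_{K\in\mathscr K(Y)}\operatorname{Homeo}_K(Y)=\operatorname{Homeo}_{cpt}(Y)$, namely $\{U\mid U\cap\operatorname{Homeo}_K(Y)\text{ open in }\operatorname{Homeo}_K(Y)\ \forall K\}$ ($\mathscr K(Y)$ the compact subsets of $Y$), coincides with the topology of $\operatorname{Homeo}_{cpt}(Y)$. *)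

theory Defs
  imports "HOL-Analysis.Analysis"
begin

definition tychonoff_space :: "'a topology \<Rightarrow> bool" where
  "tychonoff_space X \<longleftrightarrow> completely_regular_space X \<and> Hausdorff_space X"

text \<open>Stone-Cech compactification, by the standard construction: closure of the
  evaluation image of Y in the cube [0,1]^C, C = continuous maps Y \<rightarrow> [0,1].\<close>
definition sc_funs :: "'a topology \<Rightarrow> ('a \<Rightarrow> real) set" where
  "sc_funs Y = {f \<in> extensional (topspace Y). continuous_map Y (top_of_set {0..1}) f}"

definition sc_cube :: "'a topology \<Rightarrow> (('a \<Rightarrow> real) \<Rightarrow> real) topology" where
  "sc_cube Y = product_topology (\<lambda>_. top_of_set {0..1}) (sc_funs Y)"

definition sc_embed :: "'a topology \<Rightarrow> 'a \<Rightarrow> (('a \<Rightarrow> real) \<Rightarrow> real)" where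
  "sc_embed Y y = (\<lambda>f\<in>sc_funs Y. f y)"

definition stone_cech :: "'a topology \<Rightarrow> (('a \<Rightarrow> real) \<Rightarrow> real) topology" where
  "stone_cech Y = subtopology (sc_cube Y) ((sc_cube Y) closure_of (sc_embed Y ` topspace Y))"

text \<open>The (unique continuous) extension of a homeomorphism h of Y to the Stone-Cech
  compactification: it satisfies beta_ext Y h (sc_embed Y y) = sc_embed Y (h y).\<close>
definition beta_ext :: "'a topology \<Rightarrow> ('a \<Rightarrow> 'a) \<Rightarrow> (('a \<Rightarrow> real) \<Rightarrow> real) \<Rightarrow> (('a \<Rightarrow> real) \<Rightarrow> real)" where
  "beta_ext Y h = (\<lambda>p\<in>topspace (stone_cech Y). \<lambda>f\<in>sc_funs Y. p (f \<circ> h))"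

text \<open>Support of a map and compactly supported homeomorphisms (normalised to be the
  identity outside the carrier, so that they are genuine elements of a group).\<close>
definition supp_of :: "'a topology \<Rightarrow> ('a \<Rightarrow> 'a) \<Rightarrow> 'a set" where
  "supp_of Y h = Y closure_of {y \<in> topspace Y. h y \<noteq> y}"

definition Homeo_cpt :: "'a topology \<Rightarrow> ('a \<Rightarrow> 'a) set" where
  "Homeo_cpt Y = {h. homeomorphic_map Y Y h \<and> compactin Y (supp_of Y h)
                     \<and> (\<forall>x. x \<notin> topspace Y \<longrightarrow> h x = x)}"

definition Homeo_K :: "'a topology \<Rightarrow> 'a set \<Rightarrow> ('a \<Rightarrow> 'a) set" where
  "Homeo_K Y K = {h \<in> Homeo_cpt Y. \<forall>y \<in> topspace Y - K. h y = y}"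

text \<open>Compact-open topology on Homeo_cpt(Y), induced from the extensions to beta Y.\<close>
definition homeo_cpt_topology :: "'a topology \<Rightarrow> ('a \<Rightarrow> 'a) topology" where
  "homeo_cpt_topology Y = topology_generated_by
     {{h \<in> Homeo_cpt Y. beta_ext Y h ` K \<subseteq> U} | K U.
        compactin (stone_cech Y) K \<and> openin (stone_cech Y) U}"

text \<open>CSHP: the colimit topology over the compact subsets coincides with the given one.\<close>
definition CSHP :: "'a topology \<Rightarrow> bool" where
  "CSHP Y \<longleftrightarrow>
     (\<forall>U \<subseteq> Homeo_cpt Y.
        openin (homeo_cpt_topology Y) U \<longleftrightarrow>
        (\<forall>K. compactin Y K \<longrightarrow>
             openin (subtopology (homeo_cpt_topology Y) (Homeo_K Y K)) (U \<inter> Homeo_K Y K)))"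

end

theory Submission
  imports Defs
begin

lemma sc_funs_comp:
  assumes "homeomorphic_map Y Y h" "\<forall>x. x \<notin> topspace Y \<longrightarrow> h x = x" "f \<in> sc_funs Y"
  shows "f \<circ> h \<in> sc_funs Y"
proof -
  have "continuous_map Y (top_of_set {0..1}) (f \<circ> h)"
    using assms continuous_map_compose homeomorphic_imp_continuous_map
    unfolding sc_funs_def by blast
  moreover have "f \<circ> h \<in> extensional (topspace Y)"
    using assms unfolding sc_funs_def extensional_def by auto
  ultimately show ?thesis unfolding sc_funs_def by auto
qed

lemma sc_funs_Homeo: "h \<in> Homeo_cpt Y \<Longrightarrow> f \<in> sc_funs Y \<Longrightarrow> f \<circ> h \<in> sc_funs Y"
  using sc_funs_comp unfolding Homeo_cpt_def by blast

lemma embed_cube: "y \<in> topspace Y \<Longrightarrow> sc_embed Y y \<in> topspace (sc_cube Y)"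
proof -
  assume y: "y \<in> topspace Y"
  have "f y \<in> {0..1}" if "f \<in> sc_funs Y" for f
    using that y continuous_map_image_subset_topspace unfolding sc_funs_def by fastforce
  then show ?thesis unfolding sc_cube_def sc_embed_def by auto
qed

lemma topspace_sc: "topspace (stone_cech Y) = sc_cube Y closure_of (sc_embed Y ` topspace Y)"
  unfolding stone_cech_def by (simp add: closure_of_subset_topspace inf.absorb2)

lemma embed_in: "y \<in> topspace Y \<Longrightarrow> sc_embed Y y \<in> topspace (stone_cech Y)"
  unfolding topspace_sc
  by (rule closure_of_subset[THEN subsetD]) (use embed_cube in auto)

lemma sc_in_cube: "p \<in> topspace (stone_cech Y) \<Longrightarrow> p \<in> topspace (sc_cube Y)"
  unfolding stone_cech_def by simp

lemma beta_embed:
  assumes "h \<in> Homeo_cpt Y" "y \<in> topspace Y"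
  shows "beta_ext Y h (sc_embed Y y) = sc_embed Y (h y)"
proof -
  have "(\<lambda>f\<in>sc_funs Y. sc_embed Y y (f \<circ> h)) = sc_embed Y (h y)"
    using sc_funs_Homeo[OF assms(1)] unfolding sc_embed_def by (auto simp: restrict_def)
  then show ?thesis using embed_in[OF assms(2)] unfolding beta_ext_def by simp
qed

lemma beta_id: "p \<in> topspace (stone_cech Y) \<Longrightarrow> beta_ext Y id p = p"
proof -
  assume p: "p \<in> topspace (stone_cech Y)"
  then have "p \<in> extensional (sc_funs Y)" using sc_in_cube[OF p] unfolding sc_cube_def by (auto simp: PiE_def)
  then show ?thesis using p unfolding beta_ext_def by (auto simp: restrict_def extensional_def)
qed

lemma id_Homeo: "id \<in> Homeo_cpt Y"
  unfolding Homeo_cpt_def supp_of_def by auto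

definition swp :: "'a \<Rightarrow> 'a \<Rightarrow> 'a \<Rightarrow> 'a" where
  "swp x y = (\<lambda>z. if z = x then y else if z = y then x else z)"

lemma swp_Homeo:
  assumes H: "Hausdorff_space X" and xy: "x \<in> topspace X" "y \<in> topspace X"
    and ox: "openin X {x}" and oy: "openin X {y}"
  shows "swp x y \<in> Homeo_cpt X"
proof -
  have t1: "t1_space X" using H Hausdorff_imp_t1_space by blast
  have cxy: "closedin X {x,y}"
    using closedin_t1_singleton[OF t1 xy(1)] closedin_t1_singleton[OF t1 xy(2)] closedin_Un
    by (metis insert_is_Un)
  have cont: "continuous_map X X (swp x y)"
    unfolding continuous_map
  proof (intro conjI allI impI)
    show "swp x y ` topspace X \<subseteq> topspace X" using xy unfolding swp_def by auto
    fix U assume U: "openin X U"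
    have eq: "{z \<in> topspace X. swp x y z \<in> U} =
       (U - {x,y}) \<union> (if y \<in> U then {x} else {}) \<union> (if x \<in> U then {y} else {})"
      using xy openin_subset[OF U] unfolding swp_def by auto
    have "openin X (U - {x,y})" using U cxy by (simp add: openin_diff)
    then show "openin X {z \<in> topspace X. swp x y z \<in> U}"
      unfolding eq using ox oy by (intro openin_Un) auto
  qed
  have hom: "homeomorphic_map X X (swp x y)"
    by (rule homeomorphic_map_involution[OF cont]) (auto simp: swp_def)
  have "supp_of X (swp x y) \<subseteq> {x,y}"
    unfolding supp_of_def by (rule closure_of_minimal[OF _ cxy]) (auto simp: swp_def)
  then have "compactin X (supp_of X (swp x y))"
    by (metis closed_compactin closedin_closure_of finite_imp_compactin finite.emptyI finite.insertI
        insert_subset xy empty_subsetI supp_of_def)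
  moreover have "\<forall>z. z \<notin> topspace X \<longrightarrow> swp x y z = z" using xy by (auto simp: swp_def)
  ultimately show ?thesis using hom unfolding Homeo_cpt_def by auto
qed

lemma beta_swp:
  assumes H: "Hausdorff_space X" and xy: "x \<in> topspace X" "y \<in> topspace X"
    and sw: "swp x y \<in> Homeo_cpt X"
    and p: "p \<in> topspace (stone_cech X)" and px: "p \<noteq> sc_embed X x" and py: "p \<noteq> sc_embed X y"
  shows "beta_ext X (swp x y) p = p"
proof -
  let ?C = "sc_cube X"
  let ?e = "sc_embed X"
  have HC: "Hausdorff_space ?C"
    unfolding sc_cube_def by (simp add: Hausdorff_space_product_topology Hausdorff_space_subtopology)
  have fin: "closedin ?C {?e x, ?e y}"
    using Hausdorff_imp_t1_space[OF HC] embed_cube xy closedin_t1_singleton closedin_Un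
    by (metis insert_is_Un)
  have eq: "?e ` topspace X = ?e ` (topspace X - {x,y}) \<union> {?e x, ?e y}" using xy by auto
  have "p \<in> ?C closure_of (?e ` (topspace X - {x,y}) \<union> {?e x, ?e y})"
    using p unfolding topspace_sc by (metis eq)
  then have "p \<in> ?C closure_of (?e ` (topspace X - {x,y})) \<union> {?e x, ?e y}"
    unfolding closure_of_Un closure_of_closedin[OF fin] .
  then have pA: "p \<in> ?C closure_of (?e ` (topspace X - {x,y}))" using px py by auto
  have key: "p (f \<circ> swp x y) = p f" if f: "f \<in> sc_funs X" for f
  proof -
    have f2: "f \<circ> swp x y \<in> sc_funs X" using sc_funs_Homeo[OF sw f] .
    have "closedin ?C {q \<in> topspace ?C. q (f \<circ> swp x y) = q f}"
      apply (rule closedin_continuous_maps_eq[of "top_of_set {0..1::real}"])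
      using f f2 unfolding sc_cube_def
      by (auto intro!: continuous_map_product_projection Hausdorff_space_subtopology)
    moreover have "?e ` (topspace X - {x,y}) \<subseteq> {q \<in> topspace ?C. q (f \<circ> swp x y) = q f}"
      using embed_cube f f2 unfolding sc_embed_def by (auto simp: swp_def)
    ultimately show ?thesis using pA closure_of_minimal by blast
  qed
  have "p \<in> extensional (sc_funs X)" using sc_in_cube[OF p] unfolding sc_cube_def by (auto simp: PiE_def)
  then show ?thesis using p key unfolding beta_ext_def by (auto simp: restrict_def extensional_def)
qed

theorem corollary5p6:
  fixes X :: "'a topology"
  assumes "tychonoff_space X"
    and "\<exists>D. D \<subseteq> topspace X \<and> infinite D \<and> openin X D \<and> closedin X D
              \<and> subtopology X D = discrete_topology D"
  shows "\<not> CSHP X"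
proof -
  obtain D where Dsub: "D \<subseteq> topspace X" and Dinf: "infinite D" and Dop: "openin X D"
    and Dcl: "closedin X D" and Ddisc: "subtopology X D = discrete_topology D"
    using assms(2) by blast
  obtain d :: "nat \<Rightarrow> 'a" where dinj: "inj d" and dD: "range d \<subseteq> D"
    using infinite_countable_subset[OF Dinf] by blast
  have H: "Hausdorff_space X" using assms(1) unfolding tychonoff_space_def by blast
  have t1: "t1_space X" using H Hausdorff_imp_t1_space by blast
  have dtop: "d n \<in> topspace X" for n using dD Dsub by auto
  have dopen: "openin X {d n}" for n
  proof -
    have "openin (subtopology X D) {d n}" unfolding Ddisc using dD by auto
    then show ?thesis using openin_trans_full Dop by blast
  qed
  let ?e = "sc_embed X"
  let ?T = "homeo_cpt_topology X"
  define S where "S = {{h \<in> Homeo_cpt X. beta_ext X h ` K \<subseteq> U} | K U.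
        compactin (stone_cech X) K \<and> openin (stone_cech X) U}"
  have T_def: "?T = topology_generated_by S" unfolding S_def homeo_cpt_topology_def ..
  have topT: "topspace ?T = Homeo_cpt X"
  proof -
    have "Homeo_cpt X \<in> S" unfolding S_def
      by (rule CollectI, rule exI[of _ "{}"], rule exI[of _ "{}"]) auto
    moreover have "\<Union>S \<subseteq> Homeo_cpt X" unfolding S_def by auto
    ultimately show ?thesis unfolding T_def by auto
  qed
  define ind where "ind n = restrict (\<lambda>z. if z = d n then 1 else 0::real) (topspace X)" for n
  have ind_sc: "ind n \<in> sc_funs X" for n
  proof -
    have "continuous_map X (top_of_set {0..1}) (ind n)"
      unfolding continuous_map
    proof (intro conjI allI impI)
      show "ind n ` topspace X \<subseteq> topspace (top_of_set {0..1})" unfolding ind_def by auto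
      fix U :: "real set"
      have eq: "{x \<in> topspace X. ind n x \<in> U} =
        (if 1 \<in> U then {d n} else {}) \<union> (if 0 \<in> U then topspace X - {d n} else {})"
        using dtop unfolding ind_def by auto
      have "openin X (topspace X - {d n})"
        using closedin_t1_singleton[OF t1 dtop] by (simp add: openin_diff)
      then show "openin X {x \<in> topspace X. ind n x \<in> U}"
        unfolding eq using dopen by (intro openin_Un) auto
    qed
    then show ?thesis unfolding sc_funs_def ind_def by auto
  qed
  define W where "W n = {p \<in> topspace (stone_cech X). p (ind n) \<in> {1/2<..}}" for n
  have Wopen: "openin (stone_cech X) (W n)" for n
  proof -
    have "continuous_map (sc_cube X) (top_of_set {0..1}) (\<lambda>p. p (ind n))"
      unfolding sc_cube_def using ind_sc by (intro continuous_map_product_projection)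
    then have "continuous_map (stone_cech X) euclideanreal (\<lambda>p. p (ind n))"
      unfolding stone_cech_def
      by (metis continuous_map_from_subtopology continuous_map_in_subtopology)
    then show ?thesis unfolding W_def by (rule openin_continuous_map_preimage) auto
  qed
  have embW: "?e y \<in> W n \<longleftrightarrow> y = d n" if "y \<in> topspace X" for y n
  proof -
    have "?e y (ind n) = ind n y" unfolding sc_embed_def using ind_sc by (simp only: restrict_apply) simp
    moreover have "ind n y = (if y = d n then 1 else 0)" unfolding ind_def using that by (simp only: restrict_apply if_True)
    ultimately show ?thesis using embed_in[OF that] unfolding W_def by simp
  qed
  define V where "V n = {h \<in> Homeo_cpt X. beta_ext X h ` {?e (d n)} \<subseteq> W n}" for n
  have Vopen: "openin ?T (V n)" for n
  proof -
    have "V n \<in> S" unfolding S_def V_def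
      by (rule CollectI, rule exI[of _ "{?e (d n)}"], rule exI[of _ "W n"])
        (simp add: embed_in[OF dtop] Wopen)
    then show ?thesis unfolding T_def by (rule topology_generated_by_Basis)
  qed
  have Viff: "h \<in> V n \<longleftrightarrow> h (d n) = d n" if h: "h \<in> Homeo_cpt X" for h n
  proof -
    have hom: "homeomorphic_map X X h" using h unfolding Homeo_cpt_def by simp
    have "h ` topspace X = topspace X" by (rule homeomorphic_imp_surjective_map[OF hom])
    then have ht: "h (d n) \<in> topspace X" using dtop by blast
    have "h \<in> V n \<longleftrightarrow> ?e (h (d n)) \<in> W n"
      unfolding V_def using h beta_embed[OF h dtop] by simp
    then show ?thesis using embW[OF ht] by simp
  qed
  define U0 where "U0 = {h \<in> Homeo_cpt X. \<forall>n. h (d n) = d n}"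
  have colim: "openin (subtopology ?T (Homeo_K X K)) (U0 \<inter> Homeo_K X K)"
    if K: "compactin X K" for K
  proof -
    define F where "F = {n. d n \<in> K}"
    have "compactin X (D \<inter> K)" using closed_Int_compactin[OF Dcl K] .
    then have "compactin (subtopology X D) (D \<inter> K)" by (simp add: compactin_subtopology)
    then have "finite (D \<inter> K)" unfolding Ddisc by (simp add: compactin_discrete_topology)
    then have "finite (d -` (D \<inter> K))" using dinj by (rule finite_vimageI)
    moreover have "F = d -` (D \<inter> K)" unfolding F_def using dD by auto
    ultimately have Ffin: "finite F" by simp
    have op: "openin ?T ((\<Inter>n\<in>F. V n) \<inter> topspace ?T)" by (rule openin_INT[OF Ffin Vopen])
    have "U0 \<inter> Homeo_K X K = ((\<Inter>n\<in>F. V n) \<inter> topspace ?T) \<inter> Homeo_K X K"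
    proof (intro set_eqI iffI)
      fix h assume h: "h \<in> U0 \<inter> Homeo_K X K"
      then have hH: "h \<in> Homeo_cpt X" and hf: "\<forall>n. h (d n) = d n" unfolding U0_def by auto
      have "h \<in> V n" for n using Viff[OF hH] hf by blast
      then show "h \<in> ((\<Inter>n\<in>F. V n) \<inter> topspace ?T) \<inter> Homeo_K X K"
        using h hH topT by blast
    next
      fix h assume h: "h \<in> ((\<Inter>n\<in>F. V n) \<inter> topspace ?T) \<inter> Homeo_K X K"
      then have hH: "h \<in> Homeo_cpt X" and hK: "\<forall>y \<in> topspace X - K. h y = y"
        unfolding Homeo_K_def by auto
      have "h (d n) = d n" for n
      proof (cases "n \<in> F")
        case True then show ?thesis using h Viff[OF hH] by auto
      next
        case False then show ?thesis using hK dtop unfolding F_def by auto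
      qed
      then show "h \<in> U0 \<inter> Homeo_K X K" using h hH unfolding U0_def by auto
    qed
    then show ?thesis unfolding openin_subtopology using op by blast
  qed
  have gen: "id \<in> G \<longrightarrow> (\<exists>F. finite F \<and>
      (\<forall>a b. a \<noteq> b \<and> (\<forall>A\<in>F. a \<in> A \<longleftrightarrow> b \<in> A) \<longrightarrow> swp (d a) (d b) \<in> G))"
    if "generate_topology_on S G" for G
    using that
  proof (induction rule: generate_topology_on.induct)
    case Empty
    then show ?case by simp
  next
    case (Int a b)
    show ?case
    proof
      assume "id \<in> a \<inter> b"
      then obtain F1 F2 where "finite F1" "finite F2"
        "\<forall>x y. x \<noteq> y \<and> (\<forall>A\<in>F1. x \<in> A \<longleftrightarrow> y \<in> A) \<longrightarrow> swp (d x) (d y) \<in> a"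
        "\<forall>x y. x \<noteq> y \<and> (\<forall>A\<in>F2. x \<in> A \<longleftrightarrow> y \<in> A) \<longrightarrow> swp (d x) (d y) \<in> b"
        using Int.IH by blast
      then show "\<exists>F. finite F \<and> (\<forall>x y. x \<noteq> y \<and> (\<forall>A\<in>F. x \<in> A \<longleftrightarrow> y \<in> A) \<longrightarrow> swp (d x) (d y) \<in> a \<inter> b)"
        by (intro exI[of _ "F1 \<union> F2"]) auto
    qed
  next
    case (UN K)
    show ?case
    proof
      assume "id \<in> \<Union>K"
      then obtain k where kK: "k \<in> K" and idk: "id \<in> k" by blast
      have "\<exists>F. finite F \<and> (\<forall>x y. x \<noteq> y \<and> (\<forall>A\<in>F. x \<in> A \<longleftrightarrow> y \<in> A) \<longrightarrow> swp (d x) (d y) \<in> k)"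
        using UN.IH[OF kK] idk by (rule mp)
      then obtain F where "finite F"
        "\<forall>x y. x \<noteq> y \<and> (\<forall>A\<in>F. x \<in> A \<longleftrightarrow> y \<in> A) \<longrightarrow> swp (d x) (d y) \<in> k" by blast
      then show "\<exists>F. finite F \<and> (\<forall>x y. x \<noteq> y \<and> (\<forall>A\<in>F. x \<in> A \<longleftrightarrow> y \<in> A) \<longrightarrow> swp (d x) (d y) \<in> \<Union>K)"
        using kK by (intro exI[of _ F]) blast
    qed
  next
    case (Basis s)
    then obtain C Wo where s: "s = {h \<in> Homeo_cpt X. beta_ext X h ` C \<subseteq> Wo}"
      and C: "compactin (stone_cech X) C" and Wo: "openin (stone_cech X) Wo"
      unfolding S_def by blast
    show ?case
    proof
      assume "id \<in> s"
      then have CW0: "beta_ext X id ` C \<subseteq> Wo" unfolding s by blast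
      have CW: "C \<subseteq> Wo"
      proof
        fix p assume "p \<in> C"
        then have "p \<in> topspace (stone_cech X)" "beta_ext X id p \<in> Wo"
          using CW0 compactin_subset_topspace[OF C] by auto
        then show "p \<in> Wo" using beta_id by metis
      qed
      have "swp (d a) (d b) \<in> s" if ab: "a \<noteq> b" "\<forall>A\<in>{{n. ?e (d n) \<in> Wo}}. a \<in> A \<longleftrightarrow> b \<in> A" for a b
      proof -
        have same: "?e (d a) \<in> Wo \<longleftrightarrow> ?e (d b) \<in> Wo" using ab by auto
        have neq: "d a \<noteq> d b" using ab dinj by (meson injD)
        have sw: "swp (d a) (d b) \<in> Homeo_cpt X"
          using swp_Homeo[OF H dtop dtop dopen dopen] .
        have "beta_ext X (swp (d a) (d b)) p \<in> Wo" if p: "p \<in> C" for p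
        proof -
          have pt: "p \<in> topspace (stone_cech X)" using p compactin_subset_topspace[OF C] by auto
          show ?thesis
          proof (cases "p = ?e (d a) \<or> p = ?e (d b)")
            case True
            then show ?thesis
            proof
              assume pa: "p = ?e (d a)"
              then have "beta_ext X (swp (d a) (d b)) p = ?e (d b)"
                using beta_embed[OF sw dtop] by (simp add: swp_def)
              then show ?thesis using pa p CW same by auto
            next
              assume pb: "p = ?e (d b)"
              then have "beta_ext X (swp (d a) (d b)) p = ?e (d a)"
                using beta_embed[OF sw dtop] neq by (simp add: swp_def)
              then show ?thesis using pb p CW same by auto
            qed
          next
            case False
            then show ?thesis using beta_swp[OF H dtop dtop sw pt] p CW by auto
          qed
        qed
        then show ?thesis unfolding s using sw by auto
      qed
      then show "\<exists>F. finite F \<and> (\<forall>x y. x \<noteq> y \<and> (\<forall>A\<in>F. x \<in> A \<longleftrightarrow> y \<in> A) \<longrightarrow> swp (d x) (d y) \<in> s)"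
        by (intro exI[of _ "{{n. ?e (d n) \<in> Wo}}"]) auto
    qed
  qed
  have notopen: "\<not> openin ?T U0"
  proof
    assume "openin ?T U0"
    then have gU: "generate_topology_on S U0" unfolding T_def by (rule openin_topology_generated_by)
    have idU: "id \<in> U0" unfolding U0_def using id_Homeo by auto
    have "\<exists>F. finite F \<and> (\<forall>a b. a \<noteq> b \<and> (\<forall>A\<in>F. a \<in> A \<longleftrightarrow> b \<in> A) \<longrightarrow> swp (d a) (d b) \<in> U0)"
      using gen[OF gU] idU by (rule mp)
    then obtain F where Ffin: "finite F" and
      FF: "\<forall>a b. a \<noteq> b \<and> (\<forall>A\<in>F. a \<in> A \<longleftrightarrow> b \<in> A) \<longrightarrow> swp (d a) (d b) \<in> U0"
      by blast
    define g where "g n = {A \<in> F. n \<in> A}" for n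
    have "range g \<subseteq> Pow F" unfolding g_def by auto
    then have "finite (range g)" using Ffin finite_subset by blast
    then have "\<not> inj g" using finite_imageD infinite_UNIV_nat by blast
    then obtain a b where ab: "a \<noteq> b" "g a = g b" unfolding inj_def by blast
    then have "\<forall>A\<in>F. a \<in> A \<longleftrightarrow> b \<in> A" unfolding g_def by blast
    then have "swp (d a) (d b) \<in> U0" using FF ab by blast
    then have "swp (d a) (d b) (d a) = d a" unfolding U0_def by blast
    moreover have "d a \<noteq> d b" using ab dinj by (meson injD)
    ultimately show False by (simp add: swp_def)
  qed
  have "U0 \<subseteq> Homeo_cpt X" unfolding U0_def by auto
  then show ?thesis unfolding CSHP_def using colim notopen by blast
qed

end
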